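(* For any finite connected interval graph $G$, $\mathrm{imp}(G)\ge \mathrm{wt}(G)$.
   Context: A finite simple graph $G=(V,E)$ is an interval graph iff there is a representation $\alpha: v\mapsto I_v$ of the vertices by (closed, bounded) intervals of the real line such that $vw\in E$ iff $I_v\cap I_w\neq\emptyset$. For a representation $\alpha$ and a vertex $z$, the impropriety $\mathrm{imp}_\alpha(z)$ is the number of representing intervals $I_w$, $w\neq z$, with $I_w\subseteq I_z$. The impropriety $\mathrm{imp}(\alpha)$ is $\max_z \mathrm{imp}_\alpha(z)$, and $\mathrm{imp}(G)$ is the minimum of $\mathrm{imp}(\alpha)$ over all interval representations $\alpha$ of $G$. A local component at $z$ is a connected component of $G\setminus\{z\}$; it is exterior iff it contains a vertex not adjacent to $z$. If $z$ has $n$ local components, the weight $\mathrm{wt}(z)$ is the sum of the $n-2$ smallest orders among the non-exterior local components at $z$ ($0$ if $n\le2$). The weight $\mathrm{wt}(G)$ is the maximum of $\mathrm{wt}(z)$ over all vertices $z$. *)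

theory Defs
  imports Complex_Main "HOL-Library.Multiset"
begin

definition simple_graph :: "'a set \<Rightarrow> ('a \<Rightarrow> 'a \<Rightarrow> bool) \<Rightarrow> bool" where
  "simple_graph V E \<longleftrightarrow> finite V \<and> (\<forall>u v. E u v \<longrightarrow> u \<in> V \<and> v \<in> V)
     \<and> (\<forall>u v. E u v \<longrightarrow> E v u) \<and> (\<forall>u. \<not> E u u)"

definition reach :: "'a set \<Rightarrow> ('a \<Rightarrow> 'a \<Rightarrow> bool) \<Rightarrow> 'a \<Rightarrow> 'a \<Rightarrow> bool" where
  "reach S E u v \<longleftrightarrow> u \<in> S \<and> v \<in> S \<and> (\<lambda>x y. E x y \<and> x \<in> S \<and> y \<in> S)\<^sup>*\<^sup>* u v"

definition connected_graph :: "'a set \<Rightarrow> ('a \<Rightarrow> 'a \<Rightarrow> bool) \<Rightarrow> bool" where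
  "connected_graph V E \<longleftrightarrow> V \<noteq> {} \<and> (\<forall>u\<in>V. \<forall>v\<in>V. reach V E u v)"

definition interval_rep :: "'a set \<Rightarrow> ('a \<Rightarrow> 'a \<Rightarrow> bool) \<Rightarrow> ('a \<Rightarrow> real set) \<Rightarrow> bool" where
  "interval_rep V E I \<longleftrightarrow> (\<forall>v\<in>V. \<exists>a b. a \<le> b \<and> I v = {a..b})
     \<and> (\<forall>v\<in>V. \<forall>w\<in>V. v \<noteq> w \<longrightarrow> (E v w \<longleftrightarrow> I v \<inter> I w \<noteq> {}))"

definition interval_graph :: "'a set \<Rightarrow> ('a \<Rightarrow> 'a \<Rightarrow> bool) \<Rightarrow> bool" where
  "interval_graph V E \<longleftrightarrow> simple_graph V E \<and> (\<exists>I. interval_rep V E I)"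

definition imp_vertex :: "'a set \<Rightarrow> ('a \<Rightarrow> real set) \<Rightarrow> 'a \<Rightarrow> nat" where
  "imp_vertex V I z = card {w \<in> V. w \<noteq> z \<and> I w \<subseteq> I z}"

definition imp_rep :: "'a set \<Rightarrow> ('a \<Rightarrow> real set) \<Rightarrow> nat" where
  "imp_rep V I = Max (imp_vertex V I ` V)"

definition imp_graph :: "'a set \<Rightarrow> ('a \<Rightarrow> 'a \<Rightarrow> bool) \<Rightarrow> nat" where
  "imp_graph V E = (LEAST k. \<exists>I. interval_rep V E I \<and> imp_rep V I = k)"

definition local_comps :: "'a set \<Rightarrow> ('a \<Rightarrow> 'a \<Rightarrow> bool) \<Rightarrow> 'a \<Rightarrow> 'a set set" where
  "local_comps V E z = {{v. reach (V - {z}) E u v} | u. u \<in> V - {z}}"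

definition exterior :: "('a \<Rightarrow> 'a \<Rightarrow> bool) \<Rightarrow> 'a \<Rightarrow> 'a set \<Rightarrow> bool" where
  "exterior E z C \<longleftrightarrow> (\<exists>v\<in>C. \<not> E z v)"

definition wt_vertex :: "'a set \<Rightarrow> ('a \<Rightarrow> 'a \<Rightarrow> bool) \<Rightarrow> 'a \<Rightarrow> nat" where
  "wt_vertex V E z =
     (let n = card (local_comps V E z);
          orders = image_mset card (mset_set {C \<in> local_comps V E z. \<not> exterior E z C})
      in sum_list (take (n - 2) (sorted_list_of_multiset orders)))"

definition wt_graph :: "'a set \<Rightarrow> ('a \<Rightarrow> 'a \<Rightarrow> bool) \<Rightarrow> nat" where
  "wt_graph V E = Max (wt_vertex V E ` V)"

end

theory Submission
  imports Defs
begin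

lemma msub_aux: "x \<notin># A \<Longrightarrow> A \<subseteq># add_mset x B \<Longrightarrow> A \<subseteq># B"
  by (metis Diff_eq_empty_iff_mset minus_add_mset_if_not_in_lhs)

lemma take_sorted_le:
  fixes xs ys :: "nat list"
  assumes "sorted xs" "mset ys \<subseteq># mset xs" "k \<le> length ys"
  shows "sum_list (take k xs) \<le> sum_list ys"
  using assms
proof (induction xs arbitrary: ys k)
  case Nil then show ?case by simp
next
  case (Cons x xs)
  show ?case
  proof (cases k)
    case 0 then show ?thesis by simp
  next
    case (Suc k')
    show ?thesis
    proof (cases "x \<in> set ys")
      case True
      define ys' where "ys' = remove1 x ys"
      have m: "mset ys = add_mset x (mset ys')" using True by (simp add: ys'_def)
      have "mset ys' \<subseteq># mset xs" using Cons.prems(2) m by simp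
      moreover have "k' \<le> length ys'" using Cons.prems(3) Suc True by (simp add: ys'_def length_remove1)
      ultimately have "sum_list (take k' xs) \<le> sum_list ys'" using Cons by simp
      moreover have "sum_list ys = x + sum_list ys'"
      proof -
        have "sum_list ys = sum_mset (mset ys)" by (simp add: sum_mset_sum_list)
        also have "\<dots> = x + sum_mset (mset ys')" using m by simp
        also have "\<dots> = x + sum_list ys'" by (simp add: sum_mset_sum_list)
        finally show ?thesis .
      qed
      ultimately show ?thesis using Suc by simp
    next
      case False
      then obtain y ys' where ys: "ys = y # ys'" using Cons.prems(3) Suc by (cases ys) auto
      have sub: "mset ys \<subseteq># mset xs" using Cons.prems(2) False msub_aux
        by (metis mset.simps(2) set_mset_mset)
      then have "y \<in> set xs" using ys by (metis list.set_intros(1) mset_subset_eqD set_mset_mset)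
      then have xy: "x \<le> y" using Cons.prems(1) by simp
      have "mset ys' \<subseteq># mset xs" using sub ys
        by (metis mset.simps(2) mset_subset_eq_insertD subset_mset.less_imp_le)
      moreover have "k' \<le> length ys'" using Cons.prems(3) Suc ys by simp
      moreover have "sorted xs" using Cons.prems(1) by simp
      ultimately have "sum_list (take k' xs) \<le> sum_list ys'" using Cons.IH by blast
      then show ?thesis using Suc ys xy by simp
    qed
  qed
qed

lemma reach_sym:
  assumes "\<forall>u v. E u v \<longrightarrow> E v u" "reach S E u v" shows "reach S E v u"
proof -
  have "symp (\<lambda>x y. E x y \<and> x \<in> S \<and> y \<in> S)" using assms(1) by (auto intro: sympI)
  then have "symp (\<lambda>x y. E x y \<and> x \<in> S \<and> y \<in> S)\<^sup>*\<^sup>*" by (rule symp_rtranclp)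
  then show ?thesis using assms(2) unfolding reach_def by (auto dest: sympD)
qed

lemma reach_trans: "reach S E u v \<Longrightarrow> reach S E v w \<Longrightarrow> reach S E u w"
  unfolding reach_def by auto

lemma comp_eq:
  assumes "\<forall>u v. E u v \<longrightarrow> E v u" "C \<in> local_comps V E z" "x \<in> C"
  shows "C = {v. reach (V - {z}) E x v}"
proof -
  obtain u where C: "C = {v. reach (V - {z}) E u v}" using assms(2) unfolding local_comps_def by auto
  have ux: "reach (V - {z}) E u x" using assms(3) C by auto
  then have xu: "reach (V - {z}) E x u" using reach_sym assms(1) by metis
  show ?thesis
  proof (intro set_eqI iffI)
    fix v assume "v \<in> C"
    then have "reach (V - {z}) E u v" using C by simp
    then show "v \<in> {v. reach (V - {z}) E x v}" using xu reach_trans[of "V - {z}" E x u v] by simp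
  next
    fix v assume "v \<in> {v. reach (V - {z}) E x v}"
    then have "reach (V - {z}) E x v" by simp
    then show "v \<in> C" using C ux reach_trans[of "V - {z}" E u x v] by simp
  qed
qed

lemma comp_sub: "C \<in> local_comps V E z \<Longrightarrow> C \<subseteq> V - {z}"
  unfolding local_comps_def reach_def by auto

lemma path_to_nbr:
  assumes "reach V E v z" "v \<noteq> z"
  shows "\<exists>u. reach (V - {z}) E v u \<and> E u z"
proof -
  have "(\<lambda>x y. E x y \<and> x \<in> V \<and> y \<in> V)\<^sup>*\<^sup>* v z" using assms unfolding reach_def by auto
  then have "v \<noteq> z \<longrightarrow> (\<exists>u. reach (V - {z}) E v u \<and> E u z)"
  proof (induction rule: converse_rtranclp_induct)
    case base then show ?case by simp
  next
    case (step y y')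
    show ?case
    proof
      assume yz: "y \<noteq> z"
      show "\<exists>u. reach (V - {z}) E y u \<and> E u z"
      proof (cases "y' = z")
        case True
        then show ?thesis using step yz by (auto simp: reach_def)
      next
        case False
        then obtain u where u: "reach (V - {z}) E y' u" "E u z" using step by auto
        have "(\<lambda>x y. E x y \<and> x \<in> V - {z} \<and> y \<in> V - {z}) y y'" using step yz False by auto
        then have "reach (V - {z}) E y u" using u(1) unfolding reach_def
          by (auto intro: converse_rtranclp_into_rtranclp)
        then show ?thesis using u by auto
      qed
    qed
  qed
  then show ?thesis using assms by auto
qed

lemma crossing1:
  fixes lo hi :: "'a \<Rightarrow> real"
  assumes st: "\<forall>x y. Q x y \<longrightarrow> lo y \<le> hi x"
  shows "Q\<^sup>*\<^sup>* x y \<Longrightarrow> lo x < a \<Longrightarrow> a \<le> hi y \<Longrightarrow> \<exists>w. Q\<^sup>*\<^sup>* x w \<and> lo w \<le> a \<and> a \<le> hi w"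
proof (induction rule: converse_rtranclp_induct)
  case base then show ?case by auto
next
  case (step x x')
  show ?case
  proof (cases "a \<le> hi x")
    case True then show ?thesis using step by auto
  next
    case False
    then have "lo x' < a" using st step by force
    then obtain w where "Q\<^sup>*\<^sup>* x' w \<and> lo w \<le> a \<and> a \<le> hi w" using step by auto
    then show ?thesis using step(1) by (auto intro: converse_rtranclp_into_rtranclp)
  qed
qed

lemma crossing2:
  fixes lo hi :: "'a \<Rightarrow> real"
  assumes st: "\<forall>x y. Q x y \<longrightarrow> lo x \<le> hi y"
  shows "Q\<^sup>*\<^sup>* x y \<Longrightarrow> b < hi x \<Longrightarrow> lo y \<le> b \<Longrightarrow> \<exists>w. Q\<^sup>*\<^sup>* x w \<and> lo w \<le> b \<and> b \<le> hi w"
proof (induction rule: converse_rtranclp_induct)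
  case base then show ?case by auto
next
  case (step x x')
  show ?case
  proof (cases "lo x \<le> b")
    case True then show ?thesis using step by auto
  next
    case False
    then have "b < hi x'" using st step by force
    then obtain w where "Q\<^sup>*\<^sup>* x' w \<and> lo w \<le> b \<and> b \<le> hi w" using step by auto
    then show ?thesis using step(1) by (auto intro: converse_rtranclp_into_rtranclp)
  qed
qed

lemma rtr_in: "(\<lambda>x y. E x y \<and> x \<in> S \<and> y \<in> S)\<^sup>*\<^sup>* v w \<Longrightarrow> v \<in> S \<Longrightarrow> reach S E v w"
  unfolding reach_def by (induction rule: rtranclp_induct) (auto intro: rtranclp.rtrancl_into_rtrancl)

lemma main_vertex:
  assumes sg: "simple_graph V E" and cg: "connected_graph V E" and ir: "interval_rep V E I"
    and zV: "z \<in> V"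
  shows "wt_vertex V E z \<le> imp_vertex V I z"
proof -
  have finV: "finite V" and sym: "\<forall>u v. E u v \<longrightarrow> E v u"
    using sg unfolding simple_graph_def by auto
  obtain lo hi where lh: "\<forall>v\<in>V. lo v \<le> hi v \<and> I v = {lo v..hi v}"
    using ir unfolding interval_rep_def by metis
  have adj: "\<And>v w. v \<in> V \<Longrightarrow> w \<in> V \<Longrightarrow> v \<noteq> w \<Longrightarrow> E v w \<longleftrightarrow> lo v \<le> hi w \<and> lo w \<le> hi v"
  proof -
    fix v w assume "v \<in> V" "w \<in> V" "v \<noteq> w"
    then have "E v w \<longleftrightarrow> I v \<inter> I w \<noteq> {}" using ir unfolding interval_rep_def by auto
    also have "\<dots> \<longleftrightarrow> lo v \<le> hi w \<and> lo w \<le> hi v" using lh \<open>v \<in> V\<close> \<open>w \<in> V\<close> by auto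
    finally show "E v w \<longleftrightarrow> lo v \<le> hi w \<and> lo w \<le> hi v" .
  qed
  define S where "S = V - {z}"
  define R where "R = (\<lambda>x y. E x y \<and> x \<in> S \<and> y \<in> S)"
  define LC where "LC = local_comps V E z"
  define a where "a = lo z"
  define b where "b = hi z"
  have Iz: "I z = {a..b}" using lh zV by (simp add: a_def b_def)
  have LCsub: "\<And>C. C \<in> LC \<Longrightarrow> C \<subseteq> S" unfolding LC_def S_def by (rule comp_sub)
  have finLC: "finite LC"
  proof -
    have "LC \<subseteq> Pow S" using LCsub by blast
    then show ?thesis using finV unfolding S_def by (meson finite_Diff finite_Pow_iff finite_subset)
  qed
  have finC: "\<And>C. C \<in> LC \<Longrightarrow> finite C" using LCsub finV unfolding S_def
    by (meson finite_Diff finite_subset)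
  have ceq: "\<And>C x. C \<in> LC \<Longrightarrow> x \<in> C \<Longrightarrow> C = {v. reach S E x v}"
    using comp_eq[OF sym] unfolding LC_def S_def by blast
  have Rst1: "\<forall>x y. R x y \<longrightarrow> lo y \<le> hi x" using adj unfolding R_def S_def by (metis DiffD1 sg simple_graph_def)
  have Rst2: "\<forall>x y. R x y \<longrightarrow> lo x \<le> hi y" using adj unfolding R_def S_def by (metis DiffD1 sg simple_graph_def)
  define inside where "inside = {C \<in> LC. \<forall>v\<in>C. I v \<subseteq> I z}"
  define P where "P = (\<lambda>p C. \<exists>w\<in>C. lo w \<le> p \<and> p \<le> hi w)"
  have claim1: "\<And>C. C \<in> LC - inside \<Longrightarrow> P a C \<or> P b C"
  proof -
    fix C assume C: "C \<in> LC - inside"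
    then obtain v where v: "v \<in> C" "\<not> I v \<subseteq> I z" unfolding inside_def by auto
    have vS: "v \<in> S" using v C LCsub by auto
    then have vV: "v \<in> V" and vz: "v \<noteq> z" unfolding S_def by auto
    have "lo v < a \<or> b < hi v" using v(2) lh vV Iz by auto
    have "reach V E v z" using cg vV zV unfolding connected_graph_def by auto
    then have "\<exists>u. reach (V - {z}) E v u \<and> E u z" using vz by (rule path_to_nbr)
    then obtain u where u: "reach S E v u" "E u z" unfolding S_def by blast
    have uS: "u \<in> S" using u unfolding reach_def by auto
    then have "a \<le> hi u \<and> lo u \<le> b" using adj[of u z] u(2) zV unfolding S_def a_def b_def by auto
    have Rvu: "R\<^sup>*\<^sup>* v u" using u unfolding reach_def R_def by auto
    have Cv: "C = {x. reach S E v x}" using ceq C v by auto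
    show "P a C \<or> P b C"
    proof (cases "lo v < a")
      case True
      obtain w where w: "R\<^sup>*\<^sup>* v w" "lo w \<le> a" "a \<le> hi w"
        using crossing1[OF Rst1 Rvu True] \<open>a \<le> hi u \<and> lo u \<le> b\<close> by auto
      have "w \<in> C" using rtr_in[of E S v w] w(1) vS Cv unfolding R_def by auto
      then show ?thesis using w unfolding P_def by auto
    next
      case False
      then have "b < hi v" using \<open>lo v < a \<or> b < hi v\<close> by auto
      obtain w where w: "R\<^sup>*\<^sup>* v w" "lo w \<le> b" "b \<le> hi w"
        using crossing2[OF Rst2 Rvu \<open>b < hi v\<close>] \<open>a \<le> hi u \<and> lo u \<le> b\<close> by auto
      have "w \<in> C" using rtr_in[of E S v w] w(1) vS Cv unfolding R_def by auto
      then show ?thesis using w unfolding P_def by auto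
    qed
  qed
  have same: "\<And>p C1 C2. C1 \<in> LC \<Longrightarrow> C2 \<in> LC \<Longrightarrow> P p C1 \<Longrightarrow> P p C2 \<Longrightarrow> C1 = C2"
  proof -
    fix p C1 C2 assume C: "C1 \<in> LC" "C2 \<in> LC" "P p C1" "P p C2"
    then obtain w1 w2 where w: "w1 \<in> C1" "lo w1 \<le> p" "p \<le> hi w1" "w2 \<in> C2" "lo w2 \<le> p" "p \<le> hi w2"
      unfolding P_def by auto
    have wS: "w1 \<in> S" "w2 \<in> S" using w C LCsub by auto
    have "reach S E w1 w2"
    proof (cases "w1 = w2")
      case True then show ?thesis using wS unfolding reach_def by auto
    next
      case False
      then have "E w1 w2" using adj[of w1 w2] wS w unfolding S_def by auto
      then show ?thesis using wS unfolding reach_def by (auto intro: r_into_rtranclp)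
    qed
    then have "w2 \<in> C1" using ceq[OF C(1) w(1)] by auto
    then show "C1 = C2" using ceq[OF C(1)] ceq[OF C(2) w(4)] by auto
  qed
  define f where "f = (\<lambda>C. if P a C then a else b)"
  have inj: "inj_on f (LC - inside)"
  proof (rule inj_onI)
    fix C1 C2 assume C: "C1 \<in> LC - inside" "C2 \<in> LC - inside" "f C1 = f C2"
    have "P (f C1) C1" "P (f C2) C2" using claim1[OF C(1)] claim1[OF C(2)] unfolding f_def by auto
    then show "C1 = C2" using same C by auto
  qed
  have "card (LC - inside) = card (f ` (LC - inside))" using inj by (simp add: card_image)
  also have "\<dots> \<le> card {a, b}" by (rule card_mono) (auto simp: f_def)
  also have "\<dots> \<le> 2" by (simp add: card_insert_le_m1)
  finally have c2: "card (LC - inside) \<le> 2" .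
  have insub: "inside \<subseteq> LC" unfolding inside_def by auto
  have cardLC: "card LC - 2 \<le> card inside"
    using c2 card_Diff_subset[OF finite_subset[OF insub finLC] insub] card_mono[OF finLC insub] by linarith
  define NE where "NE = {C \<in> LC. \<not> exterior E z C}"
  have inNE: "inside \<subseteq> NE"
  proof
    fix C assume C: "C \<in> inside"
    have "\<not> exterior E z C"
    proof -
      have "E z v" if "v \<in> C" for v
      proof -
        have vS: "v \<in> S" using C that LCsub insub by auto
        have "I v \<subseteq> I z" using C that unfolding inside_def by auto
        moreover have "lo v \<le> hi v" "I v = {lo v..hi v}" using lh vS unfolding S_def by auto
        ultimately have "lo z \<le> hi v \<and> lo v \<le> hi z" using Iz unfolding a_def b_def by auto
        then show ?thesis using adj[of z v] zV vS unfolding S_def by auto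
      qed
      then show ?thesis unfolding exterior_def by auto
    qed
    then show "C \<in> NE" using C insub unfolding NE_def by auto
  qed
  have finNE: "finite NE" using finLC unfolding NE_def by auto
  define ys where "ys = sorted_list_of_multiset (image_mset card (mset_set inside))"
  have "mset ys \<subseteq># image_mset card (mset_set NE)"
    unfolding ys_def by (simp add: image_mset_subseteq_mono subset_imp_msubset_mset_set[OF inNE finNE])
  moreover have "card LC - 2 \<le> length ys"
  proof -
    have "length ys = size (mset ys)" by simp
    also have "\<dots> = card inside" unfolding ys_def by simp
    finally show ?thesis using cardLC by simp
  qed
  ultimately have wle: "wt_vertex V E z \<le> sum_list ys"
    unfolding wt_vertex_def Let_def LC_def[symmetric] NE_def[symmetric]
    using take_sorted_le[of "sorted_list_of_multiset (image_mset card (mset_set NE))" ys "card LC - 2"]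
    by simp
  have "sum_list ys = sum card inside"
    unfolding ys_def by (metis mset_sorted_list_of_multiset sum_mset_sum_list sum_unfold_sum_mset)
  also have "\<dots> = card (\<Union>inside)"
  proof (rule card_Union_disjoint[symmetric])
    show "pairwise disjnt inside"
      unfolding pairwise_def disjnt_def
    proof (intro ballI impI)
      fix C1 C2 assume C: "C1 \<in> inside" "C2 \<in> inside" "C1 \<noteq> C2"
      show "C1 \<inter> C2 = {}"
      proof (rule ccontr)
        assume "C1 \<inter> C2 \<noteq> {}"
        then obtain x where "x \<in> C1" "x \<in> C2" by auto
        then show False using ceq C insub by blast
      qed
    qed
    show "\<And>A. A \<in> inside \<Longrightarrow> finite A" using finC insub by auto
  qed
  also have "\<dots> \<le> card {w \<in> V. w \<noteq> z \<and> I w \<subseteq> I z}"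
  proof (rule card_mono)
    show "finite {w \<in> V. w \<noteq> z \<and> I w \<subseteq> I z}" using finV by auto
    show "\<Union>inside \<subseteq> {w \<in> V. w \<noteq> z \<and> I w \<subseteq> I z}"
      using LCsub insub unfolding inside_def S_def by blast
  qed
  finally show ?thesis using wle unfolding imp_vertex_def by simp
qed

theorem corollary2p3:
  fixes V :: "'a set" and E :: "'a \<Rightarrow> 'a \<Rightarrow> bool"
  assumes "simple_graph V E" and "connected_graph V E" and "interval_graph V E"
  shows "imp_graph V E \<ge> wt_graph V E"
proof -
  have finV: "finite V" using assms(1) unfolding simple_graph_def by auto
  have ne: "V \<noteq> {}" using assms(2) unfolding connected_graph_def by auto
  have ex: "\<exists>k. \<exists>I. interval_rep V E I \<and> imp_rep V I = k" using assms(3) unfolding interval_graph_def by auto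
  obtain I where I: "interval_rep V E I" "imp_rep V I = imp_graph V E"
    using LeastI_ex[OF ex] unfolding imp_graph_def by blast
  have "wt_graph V E \<in> wt_vertex V E ` V" unfolding wt_graph_def using finV ne by (intro Max_in) auto
  then obtain z where z: "z \<in> V" "wt_graph V E = wt_vertex V E z" by auto
  have "wt_vertex V E z \<le> imp_vertex V I z" by (rule main_vertex[OF assms(1,2) I(1) z(1)])
  also have "\<dots> \<le> imp_rep V I" unfolding imp_rep_def using finV z(1) by simp
  finally show ?thesis using z I by simp
qed

end
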